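(* Let $K$ be a field of characteristic zero and $W_n$ the Witt Lie algebra. Let $a$ be a nonzero locally finite element of $W_n$. Then for every $\lambda\in\mathbb{Z}^n$ the elements $l^+_\lambda(a)$ and $l^-_\lambda(a)$ are locally finite.
   Context: $W_n=\mathrm{Der}_K(K[x_1^{\pm1},\ldots,x_n^{\pm1}])=\bigoplus_{\alpha\in\mathbb{Z}^n}x^\alpha\mathcal{H}_n$, where $x^\alpha=x_1^{\alpha_1}\cdots x_n^{\alpha_n}$, $\mathcal{H}_n=\bigoplus_{i=1}^nKH_i$, $H_i=x_i\partial_i$. An element $a$ of a Lie algebra $\mathcal{G}$ is locally finite if $\dim_K\sum_{i\ge0}K\,\mathrm{ad}(a)^i(b)<\infty$ for all $b\in\mathcal{G}$. For $\lambda\in\mathbb{Z}^n$, the $(\mathbb{Z},\lambda)$-grading is $W_n=\bigoplus_{i\in\mathbb{Z}}W_{n,i}(\lambda)$ with $W_{n,i}(\lambda)=\bigoplus_{\alpha:\sum_j\lambda_j\alpha_j=i}x^\alpha\mathcal{H}_n$ (it is a Lie algebra grading). Writing $a=a_{i_1}+\cdots+a_{i_s}$ with $0\ne a_{i_\nu}\in W_{n,i_\nu}(\lambda)$ and $i_1<\cdots<i_s$, set $l^+_\lambda(a)=a_{i_s}$ (leading term) and $l^-_\lambda(a)=a_{i_1}$ (least term). *)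

theory Defs
  imports Main
begin

text \<open>The index set {1..n} is a finite type 'n.
  An element  a = sum_alpha x^alpha (sum_i a(alpha)(i) H_i)  is represented by its coefficient
  function  a :: ('n => int) => 'n => 'k  with finite support in alpha.\<close>

type_synonym ('n, 'k) witt = "('n \<Rightarrow> int) \<Rightarrow> 'n \<Rightarrow> 'k"

definition supp :: "('n, 'k::zero) witt \<Rightarrow> ('n \<Rightarrow> int) set" where
  "supp a = {\<alpha>. a \<alpha> \<noteq> (\<lambda>_. 0)}"

definition Witt :: "('n::finite, 'k::field) witt set" where
  "Witt = {a. finite (supp a)}"

text \<open>Lie bracket, determined by
  [x^alpha H_i, x^beta H_j] = x^(alpha+beta) (beta_i H_j - alpha_j H_i).\<close>
definition witt_bracket :: "('n::finite, 'k::field) witt \<Rightarrow> ('n, 'k) witt \<Rightarrow> ('n, 'k) witt" where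
  "witt_bracket a b = (\<lambda>\<gamma> k. \<Sum>\<alpha>\<in>supp a.
      (\<Sum>i\<in>UNIV. a \<alpha> i * of_int ((\<gamma> - \<alpha>) i)) * b (\<gamma> - \<alpha>) k
    - (\<Sum>j\<in>UNIV. b (\<gamma> - \<alpha>) j * of_int (\<alpha> j)) * a \<alpha> k)"

definition lin_comb :: "('n, 'k::field) witt set \<Rightarrow> (('n, 'k) witt \<Rightarrow> 'k) \<Rightarrow> ('n, 'k) witt" where
  "lin_comb S c = (\<lambda>\<alpha> k. \<Sum>s\<in>S. c s * s \<alpha> k)"

definition span_fin_dim :: "('n, 'k::field) witt set \<Rightarrow> bool" where
  "span_fin_dim V \<longleftrightarrow> (\<exists>S. finite S \<and> V \<subseteq> {lin_comb S c | c. True})"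

definition locally_finite :: "('n::finite, 'k::field) witt \<Rightarrow> bool" where
  "locally_finite a \<longleftrightarrow>
     (\<forall>b\<in>Witt. span_fin_dim (range (\<lambda>i. (witt_bracket a ^^ i) b)))"

definition lam_deg :: "('n::finite \<Rightarrow> int) \<Rightarrow> ('n \<Rightarrow> int) \<Rightarrow> int" where
  "lam_deg lam \<alpha> = (\<Sum>j\<in>UNIV. lam j * \<alpha> j)"

definition grade_comp :: "('n::finite \<Rightarrow> int) \<Rightarrow> int \<Rightarrow> ('n, 'k::field) witt \<Rightarrow> ('n, 'k) witt" where
  "grade_comp lam i a = (\<lambda>\<alpha>. if lam_deg lam \<alpha> = i then a \<alpha> else (\<lambda>_. 0))"

definition lead_term :: "('n::finite \<Rightarrow> int) \<Rightarrow> ('n, 'k::field) witt \<Rightarrow> ('n, 'k) witt" where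
  "lead_term lam a = grade_comp lam (Max (lam_deg lam ` supp a)) a"

definition least_term :: "('n::finite \<Rightarrow> int) \<Rightarrow> ('n, 'k::field) witt \<Rightarrow> ('n, 'k) witt" where
  "least_term lam a = grade_comp lam (Min (lam_deg lam ` supp a)) a"

end

theory Submission imports Defs "HOL-Library.Function_Algebras" "HOL.Vector_Spaces" begin

definition wscale :: "'k::field \<Rightarrow> ('n, 'k) witt \<Rightarrow> ('n, 'k) witt" where
  "wscale c f = (\<lambda>\<alpha> k. c * f \<alpha> k)"

interpretation W: vector_space wscale
  by unfold_locales (auto simp: wscale_def fun_eq_iff algebra_simps)

lemma sum_apply: "(\<Sum>i\<in>I. f i) x = (\<Sum>i\<in>I. f i x)"
  by (induction I rule: infinite_finite_induct) auto

definition above :: "('n::finite \<Rightarrow> int) \<Rightarrow> int \<Rightarrow> ('n, 'k::field) witt \<Rightarrow> bool" where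
  "above lam t x \<longleftrightarrow> (\<forall>\<gamma>. t < lam_deg lam \<gamma> \<longrightarrow> x \<gamma> = (\<lambda>_. 0))"

definition below :: "('n::finite \<Rightarrow> int) \<Rightarrow> int \<Rightarrow> ('n, 'k::field) witt \<Rightarrow> bool" where
  "below lam t x \<longleftrightarrow> (\<forall>\<gamma>. lam_deg lam \<gamma> < t \<longrightarrow> x \<gamma> = (\<lambda>_. 0))"

lemma lam_deg_diff: "lam_deg lam (\<gamma> - \<alpha>) = lam_deg lam \<gamma> - lam_deg lam \<alpha>"
  unfolding lam_deg_def by (simp add: right_diff_distrib sum_subtractf)

lemma lam_deg_neg: "lam_deg (-lam) \<gamma> = - lam_deg lam \<gamma>"
  unfolding lam_deg_def by (simp add: sum_negf)

definition bsum where
  "bsum a b \<gamma> k \<alpha> = (\<Sum>i\<in>UNIV. a \<alpha> i * of_int ((\<gamma> - \<alpha>) i)) * b (\<gamma> - \<alpha>) k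
    - (\<Sum>j\<in>UNIV. b (\<gamma> - \<alpha>) j * of_int (\<alpha> j)) * a \<alpha> k"

lemma bracket_bsum: "witt_bracket a b = (\<lambda>\<gamma> k. \<Sum>\<alpha>\<in>supp a. bsum a b \<gamma> k \<alpha>)"
  unfolding witt_bracket_def bsum_def by simp

lemma bsum_zero_a: "a \<alpha> = (\<lambda>_. 0) \<Longrightarrow> bsum a b \<gamma> k \<alpha> = 0"
  unfolding bsum_def by simp

lemma bsum_zero_b: "b (\<gamma> - \<alpha>) = (\<lambda>_. 0) \<Longrightarrow> bsum a b \<gamma> k \<alpha> = 0"
  unfolding bsum_def by simp

lemma bracket_superset:
  assumes "finite F" "supp a \<subseteq> F"
  shows "witt_bracket a b = (\<lambda>\<gamma> k. \<Sum>\<alpha>\<in>F. bsum a b \<gamma> k \<alpha>)"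
  unfolding bracket_bsum
proof (intro ext)
  fix \<gamma> k show "(\<Sum>\<alpha>\<in>supp a. bsum a b \<gamma> k \<alpha>) = (\<Sum>\<alpha>\<in>F. bsum a b \<gamma> k \<alpha>)"
    by (rule sum.mono_neutral_left) (use assms in \<open>auto simp: supp_def intro: bsum_zero_a\<close>)
qed

lemma above_bracket:
  assumes "above lam t x" "above lam u y"
  shows "above lam (t + u) (witt_bracket x y)"
  unfolding above_def
proof (intro allI impI ext)
  fix \<gamma> k assume g: "t + u < lam_deg lam \<gamma>"
  have "bsum x y \<gamma> k \<alpha> = 0" if "\<alpha> \<in> supp x" for \<alpha>
  proof -
    have "lam_deg lam \<alpha> \<le> t" using that assms(1) unfolding above_def supp_def by force
    then have "u < lam_deg lam (\<gamma> - \<alpha>)" using g by (simp add: lam_deg_diff)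
    then show ?thesis using assms(2) unfolding above_def by (simp add: bsum_zero_b)
  qed
  then show "witt_bracket x y \<gamma> k = 0" unfolding bracket_bsum by simp
qed

lemma below_bracket:
  assumes "below lam t x" "below lam u y"
  shows "below lam (t + u) (witt_bracket x y)"
  unfolding below_def
proof (intro allI impI ext)
  fix \<gamma> k assume g: "lam_deg lam \<gamma> < t + u"
  have "bsum x y \<gamma> k \<alpha> = 0" if "\<alpha> \<in> supp x" for \<alpha>
  proof -
    have "t \<le> lam_deg lam \<alpha>" using that assms(1) unfolding below_def supp_def by force
    then have "lam_deg lam (\<gamma> - \<alpha>) < u" using g by (simp add: lam_deg_diff)
    then show ?thesis using assms(2) unfolding below_def by (simp add: bsum_zero_b)
  qed
  then show "witt_bracket x y \<gamma> k = 0" unfolding bracket_bsum by simp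
qed

lemma bracket_zero: "witt_bracket a (\<lambda>_ _. 0) = (\<lambda>_ _. 0)"
  unfolding witt_bracket_def by simp

lemma bsum_add: "bsum a (x + y) \<gamma> k \<alpha> = bsum a x \<gamma> k \<alpha> + bsum a y \<gamma> k \<alpha>"
  unfolding bsum_def plus_fun_apply by (simp add: distrib_right sum.distrib ring_distribs)

lemma bracket_add: "witt_bracket a (x + y) = witt_bracket a x + witt_bracket a y"
proof -
  have e: "bsum a (x+y) \<gamma> k = (\<lambda>\<alpha>. bsum a x \<gamma> k \<alpha> + bsum a y \<gamma> k \<alpha>)" for \<gamma> k
    by (rule ext) (rule bsum_add)
  show ?thesis unfolding bracket_bsum
    by (intro ext) (simp only: e sum.distrib plus_fun_apply)
qed

lemma funpow_bracket_zero: "(witt_bracket a ^^ m) 0 = 0"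
proof (induction m)
  case (Suc m) then show ?case using bracket_zero[of a] by (simp add: zero_fun_def)
qed simp

lemma funpow_bracket_add: "(witt_bracket a ^^ m) (x + y) = (witt_bracket a ^^ m) x + (witt_bracket a ^^ m) y"
proof (induction m)
  case (Suc m) then show ?case by (simp only: funpow.simps o_apply bracket_add)
qed simp

lemma funpow_bracket_sum: "(witt_bracket a ^^ m) (\<Sum>i\<in>I. f i) = (\<Sum>i\<in>I. (witt_bracket a ^^ m) (f i))"
proof (induction I rule: infinite_finite_induct)
  case (insert x F)
  have "(witt_bracket a ^^ m) (\<Sum>i\<in>insert x F. f i) = (witt_bracket a ^^ m) (f x + (\<Sum>i\<in>F. f i))"
    by (subst sum.insert[OF insert(1,2)]) (rule refl)
  also have "\<dots> = (witt_bracket a ^^ m) (f x) + (\<Sum>i\<in>F. (witt_bracket a ^^ m) (f i))"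
    by (simp only: funpow_bracket_add insert(3))
  also have "\<dots> = (\<Sum>i\<in>insert x F. (witt_bracket a ^^ m) (f i))"
    by (subst sum.insert[OF insert(1,2)]) (rule refl)
  finally show ?case .
next
  case (infinite A)
  have "sum f A = 0" "(\<Sum>i\<in>A. (witt_bracket a ^^ m) (f i)) = 0" using infinite by (rule sum.infinite)+
  then show ?case using funpow_bracket_zero[of m a] by metis
qed (simp_all only: sum.empty funpow_bracket_zero)

lemma bracket_Witt:
  assumes "a \<in> Witt" "b \<in> Witt"
  shows "witt_bracket a b \<in> Witt"
proof -
  have "supp (witt_bracket a b) \<subseteq> (\<lambda>(\<alpha>,\<beta>). \<alpha> + \<beta>) ` (supp a \<times> supp b)"
  proof
    fix \<gamma> assume "\<gamma> \<in> supp (witt_bracket a b)"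
    then have "witt_bracket a b \<gamma> \<noteq> (\<lambda>_. 0)" unfolding supp_def by simp
    then obtain k where "witt_bracket a b \<gamma> k \<noteq> 0" by blast
    moreover have "witt_bracket a b \<gamma> k = (\<Sum>\<alpha>\<in>supp a. bsum a b \<gamma> k \<alpha>)"
      by (simp only: bracket_bsum)
    ultimately have "(\<Sum>\<alpha>\<in>supp a. bsum a b \<gamma> k \<alpha>) \<noteq> 0" by metis
    then obtain \<alpha> where "\<alpha> \<in> supp a" "bsum a b \<gamma> k \<alpha> \<noteq> 0"
      by (rule sum.not_neutral_contains_not_neutral)
    then have "\<gamma> - \<alpha> \<in> supp b" unfolding supp_def mem_Collect_eq using bsum_zero_b[of b \<gamma> \<alpha> a k] by metis
    with \<open>\<alpha> \<in> supp a\<close> show "\<gamma> \<in> (\<lambda>(\<alpha>,\<beta>). \<alpha> + \<beta>) ` (supp a \<times> supp b)"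
      by (intro image_eqI[of _ _ "(\<alpha>, \<gamma> - \<alpha>)"]) auto
  qed
  moreover have "finite ((\<lambda>(\<alpha>,\<beta>). \<alpha> + \<beta>) ` (supp a \<times> supp b))"
    using assms unfolding Witt_def by simp
  ultimately show ?thesis unfolding Witt_def using finite_subset by blast
qed

lemma funpow_Witt: "a \<in> Witt \<Longrightarrow> b \<in> Witt \<Longrightarrow> (witt_bracket a ^^ m) b \<in> Witt"
proof (induction m)
  case (Suc m) then show ?case using bracket_Witt by simp
qed simp

lemma lin_comb_span: "lin_comb S c = (\<Sum>v\<in>S. wscale (c v) v)"
  unfolding lin_comb_def wscale_def by (auto simp: fun_eq_iff sum_apply)

lemma span_fin_dimI:
  assumes "finite T" "V \<subseteq> W.span T"
  shows "span_fin_dim V"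
  unfolding span_fin_dim_def
proof (intro exI conjI)
  show "finite T" by fact
  show "V \<subseteq> {lin_comb T c |c. True}"
    using assms W.span_finite[OF assms(1)] by (auto simp: lin_comb_span)
qed

lemma span_fin_dimD:
  assumes "span_fin_dim V"
  obtains S where "finite S" "V \<subseteq> W.span S"
proof -
  obtain S where S: "finite S" "V \<subseteq> {lin_comb S c | c. True}"
    using assms unfolding span_fin_dim_def by auto
  have "lin_comb S c \<in> W.span S" for c
    unfolding lin_comb_span by (intro W.span_sum W.span_scale W.span_base)
  then show ?thesis using S that by blast
qed


lemma grade_comp_above: "above lam s (grade_comp lam s a)"
  unfolding above_def grade_comp_def by auto

lemma grade_comp_below: "below lam s (grade_comp lam s a)"
  unfolding below_def grade_comp_def by auto

lemma supp_grade_comp: "supp (grade_comp lam s a) \<subseteq> supp a"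
  unfolding supp_def grade_comp_def by auto

lemma agree:
  fixes a b :: "('n::finite,'k::field) witt"
  assumes aW: "a \<in> Witt" and ab: "above lam s a"
    and bA: "above lam d b" and bB: "below lam d b"
  shows "above lam (d + int m * s) ((witt_bracket a ^^ m) b) \<and>
         above lam (d + int m * s) ((witt_bracket (grade_comp lam s a) ^^ m) b) \<and>
         below lam (d + int m * s) ((witt_bracket (grade_comp lam s a) ^^ m) b) \<and>
         (\<forall>\<gamma>. lam_deg lam \<gamma> = d + int m * s \<longrightarrow>
            (witt_bracket (grade_comp lam s a) ^^ m) b \<gamma> = (witt_bracket a ^^ m) b \<gamma>)"
proof (induction m)
  case 0 then show ?case using bA bB by simp
next
  case (Suc m)
  define as where "as = grade_comp lam s a"
  define t where "t = d + int m * s"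
  define x where "x = (witt_bracket as ^^ m) b"
  define y where "y = (witt_bracket a ^^ m) b"
  have IH: "above lam t y" "above lam t x" "below lam t x" "\<forall>\<gamma>. lam_deg lam \<gamma> = t \<longrightarrow> x \<gamma> = y \<gamma>"
    using Suc unfolding t_def x_def y_def as_def by auto
  have tt: "d + int (Suc m) * s = s + t" unfolding t_def by (simp add: algebra_simps)
  have r1: "above lam (s+t) (witt_bracket a y)" by (rule above_bracket[OF ab IH(1)])
  have r2: "above lam (s+t) (witt_bracket as x)"
    by (rule above_bracket[OF _ IH(2)]) (simp only: as_def grade_comp_above)
  have r3: "below lam (s+t) (witt_bracket as x)"
    by (rule below_bracket[OF _ IH(3)]) (simp only: as_def grade_comp_below)
  have r4: "\<forall>\<gamma>. lam_deg lam \<gamma> = s+t \<longrightarrow> witt_bracket as x \<gamma> = witt_bracket a y \<gamma>"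
  proof (intro allI impI ext)
    fix \<gamma> k assume g: "lam_deg lam \<gamma> = s + t"
    have F: "finite (supp a)" using aW unfolding Witt_def by simp
    have e1: "witt_bracket as x = (\<lambda>\<gamma> k. \<Sum>\<alpha>\<in>supp a. bsum as x \<gamma> k \<alpha>)"
      by (rule bracket_superset[OF F]) (simp only: as_def supp_grade_comp)
    have e2: "witt_bracket a y = (\<lambda>\<gamma> k. \<Sum>\<alpha>\<in>supp a. bsum a y \<gamma> k \<alpha>)" by (rule bracket_bsum)
    have eq: "bsum as x \<gamma> k \<alpha> = bsum a y \<gamma> k \<alpha>" if "\<alpha> \<in> supp a" for \<alpha>
    proof -
      have le: "lam_deg lam \<alpha> \<le> s" using that ab unfolding above_def supp_def by force
      show ?thesis
      proof (cases "lam_deg lam \<alpha> = s")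
        case True
        then have "as \<alpha> = a \<alpha>" unfolding as_def grade_comp_def by simp
        moreover have "x (\<gamma> - \<alpha>) = y (\<gamma> - \<alpha>)" using IH(4) g True by (simp add: lam_deg_diff)
        ultimately show ?thesis unfolding bsum_def by (simp only:)
      next
        case False
        then have "t < lam_deg lam (\<gamma> - \<alpha>)" using le g by (simp add: lam_deg_diff)
        then have "x (\<gamma>-\<alpha>) = (\<lambda>_. 0)" "y (\<gamma>-\<alpha>) = (\<lambda>_. 0)" using IH(1,2) unfolding above_def by auto
        then show ?thesis by (simp only: bsum_zero_b)
      qed
    qed
    have "(\<Sum>\<alpha>\<in>supp a. bsum as x \<gamma> k \<alpha>) = (\<Sum>\<alpha>\<in>supp a. bsum a y \<gamma> k \<alpha>)"
      by (rule sum.cong[OF refl eq])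
    then show "witt_bracket as x \<gamma> k = witt_bracket a y \<gamma> k" by (subst e1, subst e2) (simp only:)
  qed
  show ?case using r1 r2 r3 r4 unfolding tt x_def y_def as_def by simp
qed

lemma gc_span:
  assumes "finite S" "v \<in> W.span S"
  shows "grade_comp lam i v \<in> W.span (grade_comp lam i ` S)"
proof -
  obtain u where v: "v = (\<Sum>w\<in>S. wscale (u w) w)" using assms W.span_finite by blast
  have "grade_comp lam i v = (\<Sum>w\<in>S. wscale (u w) (grade_comp lam i w))"
    unfolding v grade_comp_def wscale_def by (rule ext, rule ext) (simp add: sum_apply)
  also have "\<dots> \<in> W.span (grade_comp lam i ` S)"
    by (intro W.span_sum W.span_scale W.span_base imageI)
  finally show ?thesis .
qed


lemma homog_case:
  fixes a b :: "('n::finite,'k::field) witt"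
  assumes aW: "a \<in> Witt" and ab: "above lam s a" and lf: "locally_finite a"
    and bW: "b \<in> Witt" and bA: "above lam d b" and bB: "below lam d b"
  shows "\<exists>T. finite T \<and> range (\<lambda>m. (witt_bracket (grade_comp lam s a) ^^ m) b) \<subseteq> W.span T"
proof -
  define as where "as = grade_comp lam s a"
  define x where "x m = (witt_bracket as ^^ m) b" for m
  define y where "y m = (witt_bracket a ^^ m) b" for m
  have ag: "above lam (d + int m * s) (y m)" "above lam (d + int m * s) (x m)"
    "below lam (d + int m * s) (x m)"
    "\<forall>\<gamma>. lam_deg lam \<gamma> = d + int m * s \<longrightarrow> x m \<gamma> = y m \<gamma>" for m
    using agree[OF aW ab bA bB, of m] unfolding x_def y_def as_def by auto
  have "span_fin_dim (range y)" using lf bW unfolding locally_finite_def y_def by blast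
  then obtain S where S: "finite S" "range y \<subseteq> W.span S" by (rule span_fin_dimD)
  have xgc: "x m = grade_comp lam (d + int m * s) (y m)" for m
  proof (rule ext)
    fix \<gamma>
    show "x m \<gamma> = grade_comp lam (d + int m * s) (y m) \<gamma>"
    proof (cases "lam_deg lam \<gamma> = d + int m * s")
      case True then show ?thesis using ag(4)[of m] unfolding grade_comp_def by simp
    next
      case False
      then have "lam_deg lam \<gamma> < d + int m * s \<or> d + int m * s < lam_deg lam \<gamma>" by linarith
      then have "x m \<gamma> = (\<lambda>_. 0)" using ag(2,3)[of m] unfolding above_def below_def by blast
      then show ?thesis using False unfolding grade_comp_def by simp
    qed
  qed
  have "\<exists>T. finite T \<and> range x \<subseteq> W.span T"
  proof (cases "s = 0")
    case True
    have "x m \<in> W.span (grade_comp lam d ` S)" for m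
      using xgc[of m] gc_span[OF S(1), of "y m" lam d] S(2) True by auto
    then show ?thesis using S(1) by blast
  next
    case False
    obtain B where B: "B \<subseteq> range y" "W.independent B" "range y \<subseteq> W.span B"
      using W.maximal_independent_subset by blast
    have fB: "finite B" using W.independent_span_bound[OF S(1) B(2)] B(1) S(2) by blast
    have yW: "y m \<in> Witt" for m unfolding y_def by (rule funpow_Witt[OF aW bW])
    define U where "U = \<Union> (supp ` B)"
    have fU: "finite U" using fB B(1) yW unfolding U_def Witt_def by auto
    have suppspan: "supp v \<subseteq> U" if "v \<in> W.span B" for v
    proof
      fix \<gamma> assume g: "\<gamma> \<in> supp v"
      have "v \<in> range (\<lambda>u. \<Sum>w\<in>B. wscale (u w) w)" using that W.span_finite[OF fB] by (simp only:)
      then obtain u where v: "v = (\<Sum>w\<in>B. wscale (u w) w)" by (rule rangeE)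
      show "\<gamma> \<in> U"
      proof (rule ccontr)
        assume "\<gamma> \<notin> U"
        then have w0: "w \<gamma> = (\<lambda>_. 0)" if "w \<in> B" for w
        proof -
          have "\<gamma> \<notin> supp w" using \<open>\<gamma> \<notin> U\<close> that unfolding U_def by blast
          then show ?thesis unfolding supp_def mem_Collect_eq by (rule notnotD)
        qed
        have "v \<gamma> = (\<lambda>_. 0)" unfolding v
        proof (rule ext)
          fix k show "(\<Sum>w\<in>B. wscale (u w) w) \<gamma> k = 0"
            unfolding sum_apply wscale_def using w0 by simp
        qed
        with g show False unfolding supp_def by simp
      qed
    qed
    have "\<exists>M. x M = (\<lambda>_ _. 0)"
    proof (rule ccontr)
      assume nz: "\<not> ?thesis"
      have "d + int m * s \<in> lam_deg lam ` U" for m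
      proof -
        have "x m \<noteq> (\<lambda>_ _. 0)" using nz by blast
        then obtain \<gamma> where xg: "x m \<gamma> \<noteq> (\<lambda>_. 0)" by (metis ext)
        then have dg: "lam_deg lam \<gamma> = d + int m * s"
          using ag(2,3)[of m] unfolding above_def below_def by (meson linorder_neqE)
        then have "y m \<gamma> \<noteq> (\<lambda>_. 0)" using ag(4)[of m] xg by metis
        then have "\<gamma> \<in> supp (y m)" unfolding supp_def by simp
        moreover have "y m \<in> W.span B" using B(3) by auto
        ultimately have "\<gamma> \<in> U" using suppspan by auto
        with dg show ?thesis by (metis image_eqI)
      qed
      then have "range (\<lambda>m::nat. d + int m * s) \<subseteq> lam_deg lam ` U" by auto
      then have "finite (range (\<lambda>m::nat. d + int m * s))" using fU finite_subset by blast
      moreover have "inj (\<lambda>m::nat. d + int m * s)" using False by (auto simp: inj_def)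
      ultimately show False using finite_imageD infinite_UNIV_nat by blast
    qed
    then obtain M where M: "x M = (\<lambda>_ _. 0)" by blast
    have xz: "x m = (\<lambda>_ _. 0)" if "M \<le> m" for m
      using that
    proof (induction m rule: dec_induct)
      case base then show ?case by (rule M)
    next
      case (step n) then show ?case unfolding x_def using bracket_zero[of as] by simp
    qed
    have "range x \<subseteq> x ` {..M}"
    proof
      fix v assume "v \<in> range x"
      then obtain m where m: "v = x m" by blast
      show "v \<in> x ` {..M}"
      proof (cases "m \<le> M")
        case True then show ?thesis using m by blast
      next
        case False then have "v = x M" using m xz[of m] M by simp
        then show ?thesis by blast
      qed
    qed
    then show ?thesis using W.span_superset[of "x ` {..M}"] by blast
  qed
  then show ?thesis unfolding x_def as_def .
qed


lemma lf_grade: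
  fixes a :: "('n::finite,'k::field) witt"
  assumes aW: "a \<in> Witt" and ab: "above lam s a" and lf: "locally_finite a"
  shows "locally_finite (grade_comp lam s a)"
  unfolding locally_finite_def
proof
  fix b :: "('n,'k) witt" assume bW: "b \<in> Witt"
  define as where "as = grade_comp lam s a"
  define \<delta> where "\<delta> \<alpha> = (\<lambda>\<beta>. if \<beta> = \<alpha> then b \<alpha> else 0)" for \<alpha>
  have fb: "finite (supp b)" using bW unfolding Witt_def by simp
  have \<delta>W: "\<delta> \<alpha> \<in> Witt" for \<alpha>
  proof -
    have "supp (\<delta> \<alpha>) \<subseteq> {\<alpha>}" unfolding supp_def \<delta>_def by (auto simp: zero_fun_def)
    then show ?thesis unfolding Witt_def using finite_subset by blast
  qed
  have \<delta>A: "above lam (lam_deg lam \<alpha>) (\<delta> \<alpha>)" "below lam (lam_deg lam \<alpha>) (\<delta> \<alpha>)" for \<alpha>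
    unfolding above_def below_def \<delta>_def by (auto simp: zero_fun_def)
  have "\<forall>\<alpha>\<in>supp b. \<exists>T. finite T \<and> range (\<lambda>m. (witt_bracket as ^^ m) (\<delta> \<alpha>)) \<subseteq> W.span T"
    unfolding as_def using homog_case[OF aW ab lf \<delta>W \<delta>A] by blast
  then obtain T where T: "\<forall>\<alpha>\<in>supp b. finite (T \<alpha>) \<and> range (\<lambda>m. (witt_bracket as ^^ m) (\<delta> \<alpha>)) \<subseteq> W.span (T \<alpha>)"
    by metis
  have bs: "b = (\<Sum>\<alpha>\<in>supp b. \<delta> \<alpha>)"
  proof (rule ext)
    fix \<beta>
    have "(\<Sum>\<alpha>\<in>supp b. \<delta> \<alpha>) \<beta> = (\<Sum>\<alpha>\<in>supp b. if \<beta> = \<alpha> then b \<alpha> else 0)"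
      unfolding sum_apply \<delta>_def by (rule refl)
    also have "\<dots> = (if \<beta> \<in> supp b then b \<beta> else 0)" using fb by (simp add: sum.delta)
    also have "\<dots> = b \<beta>" unfolding supp_def by (auto simp: zero_fun_def)
    finally show "b \<beta> = (\<Sum>\<alpha>\<in>supp b. \<delta> \<alpha>) \<beta>" by (rule sym)
  qed
  show "span_fin_dim (range (\<lambda>i. (witt_bracket (grade_comp lam s a) ^^ i) b))"
  proof (rule span_fin_dimI)
    show "finite (\<Union>\<alpha>\<in>supp b. T \<alpha>)" using fb T by blast
    show "range (\<lambda>i. (witt_bracket (grade_comp lam s a) ^^ i) b) \<subseteq> W.span (\<Union>\<alpha>\<in>supp b. T \<alpha>)"
    proof
      fix v assume "v \<in> range (\<lambda>i. (witt_bracket (grade_comp lam s a) ^^ i) b)"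
      then obtain m where m: "v = (witt_bracket as ^^ m) b" unfolding as_def by blast
      have "v = (\<Sum>\<alpha>\<in>supp b. (witt_bracket as ^^ m) (\<delta> \<alpha>))"
        unfolding m by (subst bs) (rule funpow_bracket_sum)
      also have "\<dots> \<in> W.span (\<Union>\<alpha>\<in>supp b. T \<alpha>)"
      proof (rule W.span_sum)
        fix \<alpha> assume "\<alpha> \<in> supp b"
        then have "(witt_bracket as ^^ m) (\<delta> \<alpha>) \<in> W.span (T \<alpha>)" using T by blast
        moreover have "W.span (T \<alpha>) \<subseteq> W.span (\<Union>\<alpha>\<in>supp b. T \<alpha>)"
          using \<open>\<alpha> \<in> supp b\<close> by (intro W.span_mono) blast
        ultimately show "(witt_bracket as ^^ m) (\<delta> \<alpha>) \<in> W.span (\<Union>\<alpha>\<in>supp b. T \<alpha>)" by blast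
      qed
      finally show "v \<in> W.span (\<Union>\<alpha>\<in>supp b. T \<alpha>)" .
    qed
  qed
qed

theorem lemma2p3:
  fixes a :: "('n::finite, 'k::field_char_0) witt" and lam :: "'n \<Rightarrow> int"
  assumes "a \<in> Witt" and "a \<noteq> (\<lambda>_ _. 0)" and "locally_finite a"
  shows "locally_finite (lead_term lam a) \<and> locally_finite (least_term lam a)"
proof
  have F: "finite (lam_deg lam ` supp a)" using assms(1) unfolding Witt_def by simp
  have "above lam (Max (lam_deg lam ` supp a)) a"
    unfolding above_def
  proof (intro allI impI)
    fix \<gamma> assume g: "Max (lam_deg lam ` supp a) < lam_deg lam \<gamma>"
    show "a \<gamma> = (\<lambda>_. 0)"
    proof (rule ccontr)
      assume "a \<gamma> \<noteq> (\<lambda>_. 0)"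
      then have "\<gamma> \<in> supp a" unfolding supp_def by simp
      then have "lam_deg lam \<gamma> \<le> Max (lam_deg lam ` supp a)" using F by simp
      with g show False by simp
    qed
  qed
  then show "locally_finite (lead_term lam a)"
    unfolding lead_term_def by (rule lf_grade[OF assms(1) _ assms(3)])
  have le: "least_term lam a = grade_comp (-lam) (- Min (lam_deg lam ` supp a)) a"
    unfolding least_term_def grade_comp_def lam_deg_neg by (rule ext) simp
  have "above (-lam) (- Min (lam_deg lam ` supp a)) a"
    unfolding above_def lam_deg_neg
  proof (intro allI impI)
    fix \<gamma> assume g: "- Min (lam_deg lam ` supp a) < - lam_deg lam \<gamma>"
    show "a \<gamma> = (\<lambda>_. 0)"
    proof (rule ccontr)
      assume "a \<gamma> \<noteq> (\<lambda>_. 0)"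
      then have "\<gamma> \<in> supp a" unfolding supp_def by simp
      then have "Min (lam_deg lam ` supp a) \<le> lam_deg lam \<gamma>" using F by simp
      with g show False by simp
    qed
  qed
  then show "locally_finite (least_term lam a)"
    unfolding le by (rule lf_grade[OF assms(1) _ assms(3)])
qed

end
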